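(* Let $t \geq 2$ and $n \geq 1$ be integers, let $x = \left[\frac{nt-1}{t-1}\right]$ and $q = [x/t]$. Then $$R_{t-1,t}(K_{1,n}) = \begin{cases} x & \text{if } x = tq+1 \text{ with } x \text{ and } q \text{ both odd},\\ x+1 & \text{otherwise.}\end{cases}$$
   Context: $[a]$ denotes the integer part (floor) of a real number $a$. $K_{1,n}$ is the star with $n$ edges. For a graph $G$ and integers $1 \leq s < t$, $R_{s,t}(G)$ is the smallest positive integer $N$ such that every coloring of the edges of the complete graph $K_N$ with $t$ colors contains a (not necessarily induced) subgraph isomorphic to $G$ whose edges use at most $s$ distinct colors. *)

theory Defs
  imports Main
begin

definition complete_edges :: "nat \<Rightarrow> nat set set" where
  "complete_edges N = {{u, v} | u v. u < N \<and> v < N \<and> u \<noteq> v}"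

text \<open>A graph G = (V, E) (E a set of 2-element subsets of V) occurs as a (not necessarily
  induced) subgraph of K_N, under the edge colouring c, with its edges using at most s colours.\<close>
definition has_sub_few_colors ::
  "'a set \<Rightarrow> 'a set set \<Rightarrow> nat \<Rightarrow> (nat set \<Rightarrow> nat) \<Rightarrow> nat \<Rightarrow> bool" where
  "has_sub_few_colors V E N c s =
     (\<exists>f. inj_on f V \<and> f ` V \<subseteq> {..<N} \<and> card (c ` ((\<lambda>e. f ` e) ` E)) \<le> s)"

definition ramsey_st :: "nat \<Rightarrow> nat \<Rightarrow> 'a set \<Rightarrow> 'a set set \<Rightarrow> nat" where
  "ramsey_st s t V E = (LEAST N. 0 < N \<and>
     (\<forall>c :: nat set \<Rightarrow> nat. c ` complete_edges N \<subseteq> {..<t} \<longrightarrow> has_sub_few_colors V E N c s))"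

definition star_vertices :: "nat \<Rightarrow> nat set" where
  "star_vertices n = {0..n}"

definition star_edges :: "nat \<Rightarrow> nat set set" where
  "star_edges n = {{0, i} | i. 1 \<le> i \<and> i \<le> n}"

end

theory Submission
  imports Defs
begin

definition deg :: "nat \<Rightarrow> (nat set \<Rightarrow> nat) \<Rightarrow> nat \<Rightarrow> nat \<Rightarrow> nat" where
  "deg N c u j = card {v. v < N \<and> v \<noteq> u \<and> c {u, v} = j}"

lemma star_edges_finite: "finite (star_edges n)"
proof -
  have "star_edges n = (\<lambda>i. {0, i}) ` {1..n}" unfolding star_edges_def by auto
  thus ?thesis by simp
qed

lemma complete_edgesI: "u < N \<Longrightarrow> v < N \<Longrightarrow> u \<noteq> v \<Longrightarrow> {u, v} \<in> complete_edges N"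
  unfolding complete_edges_def by auto

lemma star_at:
  assumes col: "c ` complete_edges N \<subseteq> {..<t}" and v: "v < N" and j: "j < t"
    and d: "deg N c v j + n \<le> N - 1"
  shows "has_sub_few_colors (star_vertices n) (star_edges n) N c (t - 1)"
proof -
  define S where "S = {w. w < N \<and> w \<noteq> v \<and> c {v, w} \<noteq> j}"
  define D where "D = {w. w < N \<and> w \<noteq> v \<and> c {v, w} = j}"
  have fS: "finite S" "finite D" unfolding S_def D_def by auto
  have "S \<union> D = {..<N} - {v}" "S \<inter> D = {}" unfolding S_def D_def by auto
  hence "card S + card D = N - 1" using fS v
    by (metis card_Diff_singleton card_Un_disjoint card_lessThan finite_lessThan lessThan_iff)
  hence cS: "n \<le> card S" using d unfolding deg_def D_def by simp
  obtain g where g: "g ` {1..n} \<subseteq> S" "inj_on g {1..n}"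
    using card_le_inj[of "{1..n}" S] fS cS by auto
  define f where "f i = (if i = 0 then v else g i)" for i
  have gS: "g i \<in> S" if "i \<in> {1..n}" for i
    using g(1) that by blast
  have gv: "g i \<noteq> v" if "i \<in> {1..n}" for i
    using gS[OF that] unfolding S_def by simp
  have inj: "inj_on f (star_vertices n)"
    unfolding inj_on_def star_vertices_def
  proof (intro ballI impI)
    fix a b assume a: "a \<in> {0..n}" and b: "b \<in> {0..n}" and e: "f a = f b"
    show "a = b"
    proof (cases "a = 0")
      case True
      show ?thesis
      proof (rule ccontr)
        assume "a \<noteq> b" hence "b \<in> {1..n}" using b True by auto
        thus False using gv e True unfolding f_def by (metis atLeastAtMost_iff not_one_le_zero)
      qed
    next
      case False
      hence a1: "a \<in> {1..n}" using a by auto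
      show ?thesis
      proof (cases "b = 0")
        case True thus ?thesis using gv[OF a1] e False unfolding f_def by simp
      next
        case F2: False
        hence b1: "b \<in> {1..n}" using b by auto
        have "g a = g b" using e False F2 unfolding f_def by simp
        thus ?thesis using g(2) a1 b1 unfolding inj_on_def by blast
      qed
    qed
  qed
  have img: "f ` star_vertices n \<subseteq> {..<N}"
  proof
    fix y assume "y \<in> f ` star_vertices n"
    then obtain i where i: "i \<in> {0..n}" and y: "y = f i" unfolding star_vertices_def by auto
    show "y \<in> {..<N}"
    proof (cases "i = 0")
      case True thus ?thesis using y v unfolding f_def by simp
    next
      case False hence "g i \<in> S" using g i by auto
      thus ?thesis using y False unfolding f_def S_def by simp
    qed
  qed
  have "c ` ((\<lambda>e. f ` e) ` star_edges n) \<subseteq> {..<t} - {j}"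
  proof
    fix y assume "y \<in> c ` ((\<lambda>e. f ` e) ` star_edges n)"
    then obtain i where i: "1 \<le> i" "i \<le> n" and y: "y = c (f ` {0, i})"
      unfolding star_edges_def by auto
    have gi: "g i \<in> S" using g i by auto
    have "f ` {0, i} = {v, g i}" using i unfolding f_def by auto
    moreover have "{v, g i} \<in> complete_edges N" using gi unfolding S_def
      by (auto intro!: complete_edgesI v)
    ultimately show "y \<in> {..<t} - {j}" using col gi y unfolding S_def by auto
  qed
  hence "card (c ` ((\<lambda>e. f ` e) ` star_edges n)) \<le> t - 1"
    using j by (metis card_Diff_singleton card_lessThan card_mono finite_Diff finite_lessThan lessThan_iff)
  thus ?thesis unfolding has_sub_few_colors_def using inj img by blast
qed

lemma deg_sum:
  assumes col: "c ` complete_edges N \<subseteq> {..<t}" and v: "v < N"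
  shows "(\<Sum>j<t. deg N c v j) = N - 1"
proof -
  have "(\<Sum>j<t. deg N c v j) = card (\<Union>j<t. {w. w < N \<and> w \<noteq> v \<and> c {v, w} = j})"
    unfolding deg_def by (subst card_UN_disjoint) auto
  also have "(\<Union>j<t. {w. w < N \<and> w \<noteq> v \<and> c {v, w} = j}) = {..<N} - {v}"
  proof -
    have "\<And>w. w < N \<Longrightarrow> w \<noteq> v \<Longrightarrow> c {v, w} < t"
      using col v complete_edgesI by blast
    thus ?thesis by auto
  qed
  also have "card ({..<N} - {v}) = N - 1" using v by simp
  finally show ?thesis .
qed

lemma no_inj:
  assumes "N \<le> n"
  shows "\<not> has_sub_few_colors (star_vertices n) (star_edges n) N c s"
proof
  assume "has_sub_few_colors (star_vertices n) (star_edges n) N c s"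
  then obtain f where "inj_on f {0..n}" "f ` {0..n} \<subseteq> {..<N}"
    unfolding has_sub_few_colors_def star_vertices_def by auto
  hence "card {0..n} \<le> card {..<N}" by (meson card_inj_on_le finite_lessThan)
  thus False using assms by simp
qed



lemma upper:
  assumes col: "c ` complete_edges N \<subseteq> {..<t}" and nN: "n < N" and le: "N \<le> t * (N - n)"
  shows "has_sub_few_colors (star_vertices n) (star_edges n) N c (t - 1)"
proof -
  have v: "0 < N" using nN by simp
  have "\<exists>j<t. deg N c 0 j < N - n"
  proof (rule ccontr)
    assume "\<not> ?thesis"
    hence "\<forall>j<t. N - n \<le> deg N c 0 j" by auto
    hence "(\<Sum>j<t. N - n) \<le> (\<Sum>j<t. deg N c 0 j)" by (intro sum_mono) auto
    hence "t * (N - n) \<le> N - 1" using deg_sum[OF col v] by simp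
    thus False using le v by linarith
  qed
  then obtain j where j: "j < t" "deg N c 0 j < N - n" by auto
  show ?thesis by (rule star_at[OF col v j(1)]) (use j nN in linarith)
qed

lemma even_sym_card:
  assumes fin: "finite P" and sym: "\<And>u v. (u, v) \<in> P \<Longrightarrow> (v, u) \<in> P"
    and irr: "\<And>u. (u, u) \<notin> P"
  shows "even (card (P :: (nat \<times> nat) set))"
proof -
  define A where "A = {p \<in> P. fst p < snd p}"
  have PA: "P = A \<union> prod.swap ` A"
  proof (rule set_eqI)
    fix p show "p \<in> P \<longleftrightarrow> p \<in> A \<union> prod.swap ` A"
    proof (cases p)
      case (Pair a b)
      show ?thesis
      proof
        assume "p \<in> P"
        hence ab: "(a, b) \<in> P" "(b, a) \<in> P" using Pair sym by auto
        have "a \<noteq> b" using ab irr by auto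
        hence "a < b \<or> b < a" by auto
        thus "p \<in> A \<union> prod.swap ` A"
        proof
          assume "a < b" thus ?thesis using ab Pair unfolding A_def by auto
        next
          assume "b < a" hence "(b, a) \<in> A" using ab unfolding A_def by auto
          hence "prod.swap (b, a) \<in> prod.swap ` A" by blast
          thus ?thesis using Pair by auto
        qed
      next
        assume "p \<in> A \<union> prod.swap ` A"
        thus "p \<in> P" unfolding A_def using sym by auto
      qed
    qed
  qed
  have fA: "finite A" unfolding A_def using fin by simp
  have dis: "A \<inter> prod.swap ` A = {}" unfolding A_def by auto
  have "card P = card A + card (prod.swap ` A)"
    using PA dis fA by (simp add: card_Un_disjoint)
  also have "card (prod.swap ` A) = card A" by (simp add: card_image)
  finally show ?thesis by simp
qed

lemma parity:
  assumes col: "c ` complete_edges N \<subseteq> {..<t}" and t: "1 \<le> t"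
    and N: "N = t * q + 1" and oN: "odd N" and oq: "odd q" and n: "n = N - q"
  shows "has_sub_few_colors (star_vertices n) (star_edges n) N c (t - 1)"
proof (rule ccontr)
  assume nh: "\<not> ?thesis"
  have q1: "1 \<le> q" using oq by (cases q) auto
  have ge: "q \<le> deg N c v j" if "v < N" "j < t" for v j
  proof (rule ccontr)
    assume "\<not> q \<le> deg N c v j"
    moreover have "q \<le> t * q" using t by simp
    ultimately have "deg N c v j + n \<le> N - 1" using n N q1 by linarith
    thus False using star_at[OF col that] nh by blast
  qed
  have eq: "deg N c v j = q" if v: "v < N" and j: "j < t" for v j
  proof -
    have "(\<Sum>i<t. deg N c v i) = (\<Sum>i<t. q + (deg N c v i - q))"
      by (rule sum.cong) (use ge[OF v] in auto)
    also have "\<dots> = t * q + (\<Sum>i<t. deg N c v i - q)" by (simp add: sum.distrib)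
    finally have "(\<Sum>i<t. deg N c v i - q) = 0" using deg_sum[OF col v] N by simp
    hence "deg N c v j - q = 0" using j by simp
    thus ?thesis using ge[OF v j] by simp
  qed
  define P where "P = Sigma {..<N} (\<lambda>u. {v. v < N \<and> v \<noteq> u \<and> c {u, v} = 0})"
  have "card P = (\<Sum>u<N. deg N c u 0)" unfolding P_def deg_def by (simp add: card_SigmaI)
  also have "\<dots> = (\<Sum>u<N. q)" by (rule sum.cong) (use eq t in auto)
  finally have cP: "card P = N * q" by simp
  have "even (card P)"
  proof (rule even_sym_card)
    show "finite P" unfolding P_def by auto
    show "(v, u) \<in> P" if "(u, v) \<in> P" for u v using that unfolding P_def by (auto simp: insert_commute)
    show "(u, u) \<notin> P" for u unfolding P_def by auto
  qed
  thus False using cP oN oq by simp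
qed



lemma dvd_small: "b < (M::nat) \<Longrightarrow> a \<le> b \<Longrightarrow> M dvd (b - a) \<Longrightarrow> a = b"
proof (rule ccontr)
  assume "b < M" "a \<le> b" "M dvd (b - a)" "a \<noteq> b"
  hence "0 < b - a" by simp
  hence "M \<le> b - a" using \<open>M dvd (b - a)\<close> by (simp add: dvd_imp_le)
  thus False using \<open>b < M\<close> by simp
qed

lemma L1a: "a < (M::nat) \<Longrightarrow> b < M \<Longrightarrow> a \<le> b \<Longrightarrow> (a + c) mod M = (b + c) mod M \<Longrightarrow> a = b"
proof -
  assume h: "a < M" "b < M" "a \<le> b" "(a + c) mod M = (b + c) mod M"
  hence "M dvd (b + c) - (a + c)" using mod_eq_dvd_iff_nat[of "a + c" "b + c" M] by simp
  hence "M dvd b - a" by simp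
  thus "a = b" using dvd_small h by blast
qed

lemma L1: "a < (M::nat) \<Longrightarrow> b < M \<Longrightarrow> (a + c) mod M = (b + c) mod M \<Longrightarrow> a = b"
  using L1a[of a M b c] L1a[of b M a c] by (cases "a \<le> b") auto

lemma L2a: "odd (M::nat) \<Longrightarrow> a < M \<Longrightarrow> b < M \<Longrightarrow> a \<le> b \<Longrightarrow> (2*a) mod M = (2*b) mod M \<Longrightarrow> a = b"
proof -
  assume h: "odd M" "a < M" "b < M" "a \<le> b" "(2*a) mod M = (2*b) mod M"
  hence "M dvd 2*b - 2*a" using mod_eq_dvd_iff_nat[of "2*a" "2*b" M] by simp
  hence "M dvd 2 * (b - a)" by (simp add: diff_mult_distrib2)
  hence "M dvd b - a" using h(1) coprime_dvd_mult_right_iff[of M 2 "b - a"] by simp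
  thus "a = b" using dvd_small h by blast
qed

lemma L2: "odd (M::nat) \<Longrightarrow> a < M \<Longrightarrow> b < M \<Longrightarrow> (2*a) mod M = (2*b) mod M \<Longrightarrow> a = b"
  using L2a[of M a b] L2a[of M b a] by (cases "a \<le> b") auto

definition good_col :: "nat \<Rightarrow> nat \<Rightarrow> nat \<Rightarrow> (nat set \<Rightarrow> nat) \<Rightarrow> bool" where
  "good_col N t k c = ((\<forall>e\<in>complete_edges N. c e < t) \<and> (\<forall>u<N. \<forall>j<t. k \<le> deg N c u j))"

definition colf :: "nat \<Rightarrow> nat \<Rightarrow> nat \<Rightarrow> nat" where
  "colf t k s = min (s div k) (t - 1)"

lemma colf_lt: "1 \<le> t \<Longrightarrow> colf t k s < t" unfolding colf_def by simp

lemma colf_count: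
  assumes k: "1 \<le> k" and j: "j < t" and M: "t * k \<le> M"
  shows "k \<le> card {s. s < M \<and> colf t k s = j}"
proof -
  have sub: "{j*k..<j*k+k} \<subseteq> {s. s < M \<and> colf t k s = j}"
  proof
    fix s assume s: "s \<in> {j*k..<j*k+k}"
    have "s div k = j" using s k by (auto intro: div_nat_eqI simp: mult.commute)
    moreover have "j * k + k \<le> t * k" using j by (metis Suc_leI add.commute mult_Suc mult_le_mono1)
    ultimately show "s \<in> {s. s < M \<and> colf t k s = j}" using s j M unfolding colf_def by auto
  qed
  have "card {j*k..<j*k+k} \<le> card {s. s < M \<and> colf t k s = j}"
    by (rule card_mono[OF _ sub]) auto
  thus ?thesis by simp
qed

lemma good_from_labels:
  assumes col: "\<forall>e\<in>complete_edges N. c e < t"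
    and fS: "finite S" and cS: "card S = N - 1"
    and cnt: "\<And>j. j < t \<Longrightarrow> k \<le> card {s\<in>S. F s = j}"
    and lab: "\<And>u. u < N \<Longrightarrow> inj_on (lab u) {v. v < N \<and> v \<noteq> u}
                 \<and> lab u ` {v. v < N \<and> v \<noteq> u} \<subseteq> S
                 \<and> (\<forall>v. v < N \<and> v \<noteq> u \<longrightarrow> c {u, v} = F (lab u v))"
  shows "good_col N t k c"
  unfolding good_col_def
proof (intro conjI allI impI)
  show "\<forall>e\<in>complete_edges N. c e < t" by (rule col)
  fix u j assume u: "u < N" and j: "j < t"
  let ?nb = "{v. v < N \<and> v \<noteq> u}"
  have li: "inj_on (lab u) ?nb" and ls: "lab u ` ?nb \<subseteq> S"
    and lc: "\<And>v. v < N \<Longrightarrow> v \<noteq> u \<Longrightarrow> c {u, v} = F (lab u v)" using lab[OF u] by auto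
  have "?nb = {..<N} - {u}" by auto
  hence cnb: "card ?nb = N - 1" using u by simp
  have "card (lab u ` ?nb) = N - 1" using cnb li by (simp add: card_image)
  hence im: "lab u ` ?nb = S" using ls fS cS by (simp add: card_subset_eq)
  have "{s\<in>S. F s = j} \<subseteq> lab u ` {v. v < N \<and> v \<noteq> u \<and> c {u, v} = j}"
  proof
    fix s assume "s \<in> {s\<in>S. F s = j}"
    then obtain v where "v \<in> ?nb" "s = lab u v" "F s = j" using im by auto
    thus "s \<in> lab u ` {v. v < N \<and> v \<noteq> u \<and> c {u, v} = j}" using lc by auto
  qed
  hence "card {s\<in>S. F s = j} \<le> card (lab u ` {v. v < N \<and> v \<noteq> u \<and> c {u, v} = j})"
    by (rule card_mono[rotated]) auto
  also have "\<dots> \<le> deg N c u j" unfolding deg_def by (rule card_image_le) auto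
  finally show "k \<le> deg N c u j" using cnt[OF j] by simp
qed

lemma Min2: "Min {u, v} = min u (v::nat)" by (simp add: min_def)
lemma Max2: "Max {u, v} = max u (v::nat)" by (simp add: max_def)

definition labA :: "nat \<Rightarrow> nat \<Rightarrow> nat \<Rightarrow> nat" where
  "labA M u v = (if u = M then (2*v) mod M else if v = M then (2*u) mod M else (u + v) mod M)"

lemma labA_sym: "labA M u v = labA M v u"
  unfolding labA_def by (auto simp: add.commute)


lemma caseA:
  assumes N: "even N" and k: "1 \<le> k" and t: "1 \<le> t" and tk: "t * k \<le> N - 1"
  shows "\<exists>c. good_col N t k c"
proof -
  define M where "M = N - 1"
  have "1 \<le> t * k" using t k by simp
  hence M1: "1 \<le> M" using tk M_def by linarith
  have NM: "N = M + 1" using M1 M_def by simp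
  have oM: "odd M" using N NM by simp
  define c where "c e = colf t k (labA M (Min e) (Max e))" for e
  have ce: "c {u, v} = colf t k (labA M u v)" for u v
  proof (cases "u \<le> v")
    case True thus ?thesis unfolding c_def Min2 Max2 by (simp add: min_def max_def)
  next
    case False thus ?thesis unfolding c_def Min2 Max2 using labA_sym[of M u v] by (simp add: min_def max_def)
  qed
  show ?thesis
  proof (rule exI, rule good_from_labels[where S = "{..<M}" and F = "colf t k" and lab = "labA M"])
    show "\<forall>e\<in>complete_edges N. c e < t" unfolding c_def using colf_lt t by simp
    show "finite {..<M}" by simp
    show "card {..<M} = N - 1" using M_def by simp
    show "k \<le> card {s \<in> {..<M}. colf t k s = j}" if "j < t" for j
      using colf_count[OF k that tk] M_def by (simp add: lessThan_def conj_commute)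
  next
    fix u assume u: "u < N"
    have rng: "labA M u v < M" for v using M1 unfolding labA_def by auto
    have inj: "inj_on (labA M u) {v. v < N \<and> v \<noteq> u}"
    proof (rule inj_onI)
      fix v w assume v: "v \<in> {v. v < N \<and> v \<noteq> u}" and w: "w \<in> {v. v < N \<and> v \<noteq> u}"
        and e: "labA M u v = labA M u w"
      show "v = w"
      proof (cases "u = M")
        case True
        hence vw: "v < M" "w < M" using v w NM by auto
        have "(2*v) mod M = (2*w) mod M" using e True by (simp add: labA_def)
        thus ?thesis using L2[OF oM vw] by blast
      next
        case uM: False
        hence uM': "u < M" using u NM by simp
        have a1: "labA M u x = (if x = M then (u + u) mod M else (x + u) mod M)" for x
          using uM by (simp add: labA_def mult_2 add.commute)
        show ?thesis
        proof (cases "v = M")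
          case vM: True
          show ?thesis
          proof (rule ccontr)
            assume "v \<noteq> w"
            hence wM: "w \<noteq> M" using vM by simp
            hence "w < M" using w NM by auto
            moreover have "(u + u) mod M = (w + u) mod M" using e vM wM a1[of v] a1[of w] by simp
            ultimately have "u = w" using L1 uM' by blast
            thus False using w by simp
          qed
        next
          case vM: False
          hence vM': "v < M" using v NM by auto
          show ?thesis
          proof (cases "w = M")
            case wM: True
            have "(u + u) mod M = (v + u) mod M" using e vM wM a1[of v] a1[of w] by simp
            hence "u = v" using L1 uM' vM' by blast
            thus ?thesis using v by simp
          next
            case wM: False
            hence "w < M" using w NM by auto
            moreover have "(v + u) mod M = (w + u) mod M" using e vM wM a1[of v] a1[of w] by simp
            ultimately show ?thesis using L1 vM' by blast
          qed
        qed
      qed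
    qed
    show "inj_on (labA M u) {v. v < N \<and> v \<noteq> u} \<and> labA M u ` {v. v < N \<and> v \<noteq> u} \<subseteq> {..<M}
          \<and> (\<forall>v. v < N \<and> v \<noteq> u \<longrightarrow> c {u, v} = colf t k (labA M u v))"
      using inj rng ce by auto
  qed
qed



lemma caseB:
  assumes N: "odd N" and k: "1 \<le> k" and t: "1 \<le> t" and tk: "t * k \<le> N - 2"
  shows "\<exists>c. good_col N t k c"
proof -
  define N' where "N' = N - 1"
  have "1 \<le> t * k" using t k by simp
  hence N3: "N = N' + 1" "t * k \<le> N' - 1" "1 \<le> N'" using tk N'_def by linarith+
  have eN': "even N'" using N N3 by simp
  obtain c' where c': "good_col N' t k c'" using caseA[OF eN' k t N3(2)] by blast
  define c where "c e = (if N' \<in> e then colf t k (Min e) else c' e)" for e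
  show ?thesis unfolding good_col_def
  proof (intro exI conjI ballI allI impI)
    fix e assume e: "e \<in> complete_edges N"
    then obtain u v where uv: "e = {u, v}" "u < N" "v < N" "u \<noteq> v" unfolding complete_edges_def by auto
    show "c e < t"
    proof (cases "N' \<in> e")
      case True thus ?thesis unfolding c_def using colf_lt t by simp
    next
      case False
      hence "u < N'" "v < N'" using uv N3 by auto
      hence "e \<in> complete_edges N'" using uv complete_edgesI by simp
      thus ?thesis using c' False unfolding good_col_def c_def by simp
    qed
  next
    fix u j assume u: "u < N" and j: "j < t"
    show "k \<le> deg N c u j"
    proof (cases "u = N'")
      case False
      hence u': "u < N'" using u N3 by simp
      have "{v. v < N' \<and> v \<noteq> u \<and> c' {u, v} = j} \<subseteq> {v. v < N \<and> v \<noteq> u \<and> c {u, v} = j}"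
        using u' N3 unfolding c_def by auto
      hence "deg N' c' u j \<le> deg N c u j" unfolding deg_def by (intro card_mono) auto
      thus ?thesis using c' u' j unfolding good_col_def by fastforce
    next
      case True
      have "{s. s < N' \<and> colf t k s = j} \<subseteq> {v. v < N \<and> v \<noteq> u \<and> c {u, v} = j}"
      proof
        fix s assume s: "s \<in> {s. s < N' \<and> colf t k s = j}"
        hence "Min {u, s} = s" using True by (simp add: Min2)
        thus "s \<in> {v. v < N \<and> v \<noteq> u \<and> c {u, v} = j}" using s True N3 unfolding c_def by auto
      qed
      hence "card {s. s < N' \<and> colf t k s = j} \<le> deg N c u j" unfolding deg_def by (intro card_mono) auto
      moreover have "k \<le> card {s. s < N' \<and> colf t k s = j}"
        using colf_count[OF k j] N3 by simp
      ultimately show ?thesis by simp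
    qed
  qed
qed

lemma caseC:
  assumes N: "odd N" and ek: "even k" and k: "1 \<le> k" and t: "1 \<le> t" and tk: "t * k \<le> N - 1"
  shows "\<exists>c. good_col N t k c"
proof -
  define h where "h = k div 2"
  have kh: "k = 2 * h" using ek h_def by simp
  have h1: "1 \<le> h" using k kh by simp
  have th: "2 * (t * h) \<le> N - 1" using tk kh by (simp add: ac_simps)
  define F where "F d = colf t h (min d (N - d) - 1)" for d
  define c where "c e = F (Max e - Min e)" for e
  define lab where "lab u v = (v + N - u) mod N" for u v
  have labC: "lab u v = (if u < v then v - u else N - (u - v))" if "u < N" "v < N" "u \<noteq> v" for u v
  proof (cases "u < v")
    case True
    hence "v + N - u = (v - u) + N" by simp
    hence "lab u v = (v - u) mod N" unfolding lab_def by simp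
    thus ?thesis using True that by simp
  next
    case False
    hence "v + N - u = N - (u - v)" "N - (u - v) < N" using that by auto
    thus ?thesis unfolding lab_def using False by simp
  qed
  have Fsym: "F (N - d) = F d" if "d \<le> N" for d
    unfolding F_def using that by (simp add: min.commute)
  have ce: "c {u, v} = F (lab u v)" if "u < N" "v < N" "u \<noteq> v" for u v
  proof (cases "u < v")
    case True thus ?thesis using labC[OF that] unfolding c_def Min2 Max2 by (simp add: min_def max_def)
  next
    case False
    hence "c {u, v} = F (u - v)" unfolding c_def Min2 Max2 by (simp add: min_def max_def)
    also have "\<dots> = F (N - (u - v))" using Fsym[of "u - v"] that by simp
    finally show ?thesis using labC[OF that] False by simp
  qed
  show ?thesis
  proof (rule exI, rule good_from_labels[where S = "{1..<N}" and F = F and lab = lab])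
    show "\<forall>e\<in>complete_edges N. c e < t" unfolding c_def F_def using colf_lt t by simp
    show "finite {1..<N}" by simp
    show "card {1..<N} = N - 1" by simp
  next
    fix j assume j: "j < t"
    define D where "D = {j*h+1..j*h+h}"
    have jh: "j * h + h \<le> t * h" using j by (metis Suc_leI add.commute mult_Suc mult_le_mono1)
    have Dp: "1 \<le> d" "2 * d \<le> N - 1" "F d = j" if "d \<in> D" for d
    proof -
      show "1 \<le> d" using that unfolding D_def by simp
      show d2: "2 * d \<le> N - 1" using that jh th unfolding D_def by simp
      have "min d (N - d) = d" using d2 by simp
      moreover have "(d - 1) div h = j" using that h1 unfolding D_def
        by (auto intro: div_nat_eqI simp: mult.commute)
      ultimately show "F d = j" unfolding F_def colf_def using j by simp
    qed
    have s1: "D \<subseteq> {s \<in> {1..<N}. F s = j}" using Dp by fastforce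
    have s2: "(\<lambda>d. N - d) ` D \<subseteq> {s \<in> {1..<N}. F s = j}"
    proof
      fix s assume "s \<in> (\<lambda>d. N - d) ` D"
      then obtain d where d: "d \<in> D" "s = N - d" by auto
      thus "s \<in> {s \<in> {1..<N}. F s = j}" using Dp[OF d(1)] Fsym[of d] by auto
    qed
    have nd: "x \<notin> (\<lambda>d. N - d) ` D" if x: "x \<in> D" for x
    proof
      assume "x \<in> (\<lambda>d. N - d) ` D"
      then obtain d where d: "d \<in> D" "x = N - d" by auto
      have "2 * d \<le> N - 1" "2 * x \<le> N - 1" "1 \<le> d" using Dp d(1) x by auto
      thus False using d(2) by linarith
    qed
    have dis: "D \<inter> (\<lambda>d. N - d) ` D = {}" using nd by blast
    have injD: "inj_on (\<lambda>d. N - d) D" using Dp by (intro inj_onI) fastforce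
    have "card (D \<union> (\<lambda>d. N - d) ` D) = card D + card D"
      using dis injD unfolding D_def by (simp add: card_Un_disjoint card_image)
    also have "card D = h" unfolding D_def by simp
    finally have "card (D \<union> (\<lambda>d. N - d) ` D) = k" using kh by simp
    moreover have "card (D \<union> (\<lambda>d. N - d) ` D) \<le> card {s \<in> {1..<N}. F s = j}"
      using s1 s2 by (intro card_mono) auto
    ultimately show "k \<le> card {s \<in> {1..<N}. F s = j}" by simp
  next
    fix u assume u: "u < N"
    have inj: "inj_on (lab u) {v. v < N \<and> v \<noteq> u}"
    proof (rule inj_onI)
      fix v w assume v: "v \<in> {v. v < N \<and> v \<noteq> u}" and w: "w \<in> {v. v < N \<and> v \<noteq> u}"
        and e: "lab u v = lab u w"
      have "(if u < v then v - u else N - (u - v)) = (if u < w then w - u else N - (u - w))"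
        using e labC[OF u] v w by simp
      thus "v = w" using v w u by (auto split: if_splits)
    qed
    have rng: "lab u v \<in> {1..<N}" if "v \<in> {v. v < N \<and> v \<noteq> u}" for v
      using labC[OF u] that u by (cases "u < v") auto
    show "inj_on (lab u) {v. v < N \<and> v \<noteq> u} \<and> lab u ` {v. v < N \<and> v \<noteq> u} \<subseteq> {1..<N}
          \<and> (\<forall>v. v < N \<and> v \<noteq> u \<longrightarrow> c {u, v} = F (lab u v))"
      using inj rng ce u by auto
  qed
qed

lemma construct:
  assumes k: "1 \<le> k" and t: "1 \<le> t" and tk: "t * k \<le> N - 1"
    and ne: "\<not> (odd N \<and> odd k \<and> t * k = N - 1)"
  shows "\<exists>c. good_col N t k c"
proof (cases "even N")
  case True thus ?thesis using caseA k t tk by blast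
next
  case False
  show ?thesis
  proof (cases "t * k = N - 1")
    case True
    hence "even k" using ne False by blast
    thus ?thesis using caseC False k t tk by blast
  next
    case F2: False
    hence "t * k \<le> N - 2" using tk by simp
    thus ?thesis using caseB False k t by blast
  qed
qed



lemma ar1:
  fixes T n x N :: nat
  assumes T: "1 \<le> T" and x: "x = (n * (T + 1) - 1) div T" and n: "1 \<le> n"
  shows "x * T \<le> n * T + n - 1" "n * T + n - 1 < x * T + T"
proof -
  have e: "n * (T + 1) - 1 = n * T + n - 1" by (simp add: distrib_left)
  have "x * T + (n * (T + 1) - 1) mod T = n * (T + 1) - 1" using x div_mult_mod_eq by blast
  moreover have "(n * (T + 1) - 1) mod T < T" using T by simp
  ultimately show "x * T \<le> n * T + n - 1" "n * T + n - 1 < x * T + T" using e by linarith+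
qed

lemma ar_U:
  fixes T n x N :: nat
  assumes T: "1 \<le> T" and n: "1 \<le> n" and h2: "n * T + n - 1 < x * T + T" and N: "x + 1 \<le> N"
  shows "N \<le> (T + 1) * (N - n)" "n < N"
proof -
  have "(x + 1) * T \<le> N * T" using N by (rule mult_le_mono1)
  hence a: "n * T + n \<le> N * T" using h2 n by (simp add: algebra_simps)
  hence "n * T < N * T" using n by linarith
  hence nN: "n < N" by simp
  have "T * (N - n) = N * T - n * T" by (simp add: diff_mult_distrib2 mult.commute)
  moreover have "n * T \<le> N * T" using nN by simp
  moreover have "n * T = T * n" "N * T = T * N" by (rule mult.commute)+
  ultimately have "n \<le> T * (N - n)" using a by linarith
  moreover have "(T + 1) * (N - n) = T * (N - n) + (N - n)" by (simp add: add_mult_distrib)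
  ultimately show "N \<le> (T + 1) * (N - n)" using nN by linarith
  show "n < N" by (rule nN)
qed

lemma ar_L:
  fixes T n x N :: nat
  assumes h1: "x * T \<le> n * T + n - 1" and N: "N \<le> x" and nN: "n < N" and n1: "1 \<le> n"
  shows "(T + 1) * (N - n) \<le> N - 1"
proof -
  have "N * T \<le> x * T" using N by (rule mult_le_mono1)
  hence a: "N * T \<le> n * T + n - 1" using h1 by linarith
  have "T * (N - n) = N * T - n * T" by (simp add: diff_mult_distrib2 mult.commute)
  moreover have "n * T \<le> N * T" using nN by simp
  moreover have "n * T = T * n" "N * T = T * N" by (rule mult.commute)+
  ultimately have "T * (N - n) \<le> n - 1" using a by linarith
  moreover have "(T + 1) * (N - n) = T * (N - n) + (N - n)" by (simp add: add_mult_distrib)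
  ultimately show ?thesis using nN n1 by linarith
qed

lemma ar_E:
  fixes T n x N :: nat
  assumes T: "1 \<le> T" and x: "x = (n * (T + 1) - 1) div T" and nN: "n < N" and n1: "1 \<le> n"
    and e: "(T + 1) * (N - n) = N - 1"
  shows "N = x"
proof -
  have "T * (N - n) + (N - n) = N - 1" using e by (simp add: add_mult_distrib)
  hence "T * (N - n) = n - 1" using nN by linarith
  hence A: "T * N - T * n = n - 1" by (simp add: diff_mult_distrib2)
  have B: "T * n \<le> T * N" using nN by simp
  have C: "T * N = T * n + (T * N - T * n)" using B by simp
  have "T * N = T * n + (n - 1)" using C A by simp
  also have "\<dots> = n * T + n - 1" using n1 by (simp add: mult.commute)
  also have "\<dots> = n * (T + 1) - 1" by (simp add: distrib_left)
  finally have "T * N = n * (T + 1) - 1" .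
  hence "x = (N * T) div T" using x by (simp add: mult.commute)
  thus ?thesis using T by simp
qed

lemma good_no_star:
  assumes g: "good_col N t k c" and t: "2 \<le> t" and kn: "k + n = N" and k1: "1 \<le> k"
  shows "\<not> has_sub_few_colors (star_vertices n) (star_edges n) N c (t - 1)"
proof
  assume "has_sub_few_colors (star_vertices n) (star_edges n) N c (t - 1)"
  then obtain f where inj: "inj_on f {0..n}" and img: "f ` {0..n} \<subseteq> {..<N}"
    and cd: "card (c ` ((\<lambda>e. f ` e) ` star_edges n)) \<le> t - 1"
    unfolding has_sub_few_colors_def star_vertices_def by auto
  define v where "v = f 0"
  define L where "L = f ` {1..n}"
  have "0 \<in> {0..n}" by simp
  hence "f 0 \<in> {..<N}" using img by blast
  hence vN: "v < N" unfolding v_def by simp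
  have cL: "card L = n" unfolding L_def using inj by (simp add: card_image inj_on_subset[OF inj])
  have vL: "v \<notin> L"
  proof
    assume "v \<in> L"
    then obtain i where i: "i \<in> {1..n}" "f 0 = f i" unfolding L_def v_def by auto
    hence "0 = i" using inj_onD[OF inj i(2)] by auto
    thus False using i by simp
  qed
  have "{1..n} \<subseteq> {0..n}" by auto
  hence "f ` {1..n} \<subseteq> f ` {0..n}" by (rule image_mono)
  hence LN: "L \<subseteq> {..<N}" unfolding L_def using img by blast
  have sub: "{..<t} \<subseteq> c ` ((\<lambda>e. f ` e) ` star_edges n)"
  proof
    fix j assume j: "j \<in> {..<t}"
    define D where "D = {w. w < N \<and> w \<noteq> v \<and> c {v, w} = j}"
    have kD: "k \<le> card D" using g vN j unfolding good_col_def deg_def D_def by auto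
    have "D \<inter> L \<noteq> {}"
    proof
      assume "D \<inter> L = {}"
      hence "D \<subseteq> {..<N} - insert v L" unfolding D_def by auto
      hence "card D \<le> card ({..<N} - insert v L)" by (intro card_mono) auto
      also have "\<dots> = N - (n + 1)"
        using LN vN vL cL by (subst card_Diff_subset) (auto simp: card_insert_if finite_subset)
      finally show False using kD kn k1 by linarith
    qed
    then obtain w where w: "w \<in> D" "w \<in> L" by blast
    then obtain i where i0: "i \<in> {1..n}" "w = f i" unfolding L_def by blast
    hence i: "i \<in> {1..n}" "f i \<in> D" using w by auto
    have "{0, i} \<in> star_edges n" using i unfolding star_edges_def by auto
    moreover have "f ` {0, i} = {v, f i}" unfolding v_def by simp
    ultimately have "{v, f i} \<in> (\<lambda>e. f ` e) ` star_edges n" by (metis image_eqI)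
    moreover have "c {v, f i} = j" using i(2) unfolding D_def by simp
    ultimately show "j \<in> c ` ((\<lambda>e. f ` e) ` star_edges n)" by (metis image_eqI)
  qed
  have "card {..<t} \<le> card (c ` ((\<lambda>e. f ` e) ` star_edges n))"
    by (rule card_mono[OF _ sub]) (simp add: star_edges_finite)
  thus False using cd t by simp
qed



lemma exc_n:
  fixes T n x q :: nat
  assumes T: "1 \<le> T" and n1: "1 \<le> n" and h1: "x * T \<le> n * T + n - 1"
    and h2: "n * T + n - 1 < x * T + T" and xq: "x = (T + 1) * q + 1"
  shows "n = T * q + 1"
proof -
  define U where "U = T * q"
  have xU: "x = U + q + 1" using xq unfolding U_def by (simp add: add_mult_distrib)
  have "x * T = U * T + q * T + T" using xU by (simp add: add_mult_distrib)
  moreover have "q * T = U" unfolding U_def by (rule mult.commute)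
  ultimately have xT: "x * T = U * T + U + T" by simp
  have a1: "x * T + 1 \<le> n * T + n" using h1 n1 by linarith
  have a2: "n * T + n \<le> x * T + T" using h2 n1 by linarith
  show ?thesis
  proof (rule ccontr)
    assume "n \<noteq> T * q + 1"
    hence "n \<le> U \<or> U + 2 \<le> n" unfolding U_def by linarith
    thus False
    proof
      assume nU: "n \<le> U"
      hence "n * T \<le> U * T" by (rule mult_le_mono1)
      thus False using a1 xT nU by linarith
    next
      assume nU: "U + 2 \<le> n"
      hence "(U + 2) * T \<le> n * T" by (rule mult_le_mono1)
      moreover have "(U + 2) * T = U * T + 2 * T" by (simp add: add_mult_distrib)
      ultimately show False using a2 xT nU by linarith
    qed
  qed
qed


theorem theorem3:
  fixes t n x q :: nat
  assumes "t \<ge> 2" and "n \<ge> 1"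
    and "x = (n * t - 1) div (t - 1)" and "q = x div t"
  shows "ramsey_st (t - 1) t (star_vertices n) (star_edges n) =
           (if x = t * q + 1 \<and> odd x \<and> odd q then x else x + 1)"
proof -
  define T where "T = t - 1"
  have T1: "1 \<le> T" and tT: "t = T + 1" using assms(1) T_def by auto
  have xd: "x = (n * (T + 1) - 1) div T" using assms(3) unfolding tT by simp
  note h = ar1[OF T1 xd assms(2)]
  have nx: "n \<le> x"
  proof (rule ccontr)
    assume "\<not> n \<le> x"
    hence "x + 1 \<le> n" by simp
    hence "(x + 1) * T \<le> n * T" by (rule mult_le_mono1)
    moreover have "(x + 1) * T = x * T + T" by simp
    ultimately show False using h(2) assms(2) by linarith
  qed
  define exc where "exc = (x = t * q + 1 \<and> odd x \<and> odd q)"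
  define A where "A = (if exc then x else x + 1)"
  define P where "P N = (0 < N \<and> (\<forall>c :: nat set \<Rightarrow> nat. c ` complete_edges N \<subseteq> {..<t}
      \<longrightarrow> has_sub_few_colors (star_vertices n) (star_edges n) N c (t - 1)))" for N
  have R: "ramsey_st (t - 1) t (star_vertices n) (star_edges n) = (LEAST N. P N)"
    unfolding ramsey_st_def P_def by simp
  have PA: "P A"
  proof (cases exc)
    case True
    hence xq: "x = t * q + 1" and ox: "odd x" and oq: "odd q" unfolding exc_def by auto
    have nq: "n = T * q + 1" using exc_n[OF T1 assms(2) h(1) h(2)] xq tT by simp
    have nxq: "n = x - q" using nq xq tT by simp
    have "0 < x" using xq by simp
    thus ?thesis unfolding P_def A_def using True
      using parity[OF _ _ xq ox oq nxq] assms(1) by auto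
  next
    case False
    have U: "x + 1 \<le> (T + 1) * (x + 1 - n)" "n < x + 1" using ar_U[OF T1 assms(2) h(2), of "x + 1"] by auto
    have U1: "x + 1 \<le> t * (x + 1 - n)" using U(1) tT by simp
    show ?thesis unfolding P_def A_def using False upper[OF _ U(2) U1] by auto
  qed
  have min: "A \<le> N" if PN: "P N" for N
  proof (rule ccontr)
    assume NA: "\<not> A \<le> N"
    hence Nx: "N \<le> x" unfolding A_def by (auto split: if_splits)
    have N0: "0 < N" using PN unfolding P_def by simp
    show False
    proof (cases "N \<le> n")
      case True
      have "(\<lambda>_. 0::nat) ` complete_edges N \<subseteq> {..<t}" using assms(1) by auto
      hence "has_sub_few_colors (star_vertices n) (star_edges n) N (\<lambda>_. 0) (t - 1)"
        using PN unfolding P_def by blast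
      thus False using no_inj[OF True] by blast
    next
      case False
      hence nN: "n < N" by simp
      define k where "k = N - n"
      have k1: "1 \<le> k" using nN k_def by simp
      have tk: "t * k \<le> N - 1" using ar_L[OF h(1) Nx nN assms(2)] tT k_def by simp
      have ne: "\<not> (odd N \<and> odd k \<and> t * k = N - 1)"
      proof
        assume H: "odd N \<and> odd k \<and> t * k = N - 1"
        hence "(T + 1) * (N - n) = N - 1" using tT k_def by simp
        hence Nx': "N = x" using ar_E[OF T1 xd nN assms(2)] by simp
        hence xk: "x = t * k + 1" using H N0 by simp
        have "t * k + 1 < t * Suc k" using assms(1) by simp
        hence "(t * k + 1) div t = k" by (intro div_nat_eqI) auto
        hence "q = k" using assms(4) xk by simp
        hence "exc" unfolding exc_def using xk H Nx' by simp
        thus False using NA Nx' unfolding A_def by simp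
      qed
      have t1: "1 \<le> t" using assms(1) by simp
      obtain c where c: "good_col N t k c" using construct[OF k1 t1 tk ne] by blast
      have "c ` complete_edges N \<subseteq> {..<t}" using c unfolding good_col_def by auto
      hence "has_sub_few_colors (star_vertices n) (star_edges n) N c (t - 1)"
        using PN unfolding P_def by blast
      moreover have "k + n = N" using k_def nN by simp
      ultimately show False using good_no_star[OF c assms(1) _ k1] by blast
    qed
  qed
  have "(LEAST N. P N) = A" by (rule Least_equality[where P = P, OF PA min])
  thus ?thesis using R unfolding A_def exc_def by simp
qed


end
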